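(* For every $\xi\in\mathbb R^3\setminus\{0\}$, all eigenvalues of the matrix $$A(\xi)=\begin{pmatrix}0&|\xi|&0&0\\-|\xi|&\nu|\xi|^2&-|\xi|&-\frac{1}{3\mathcal C}|\xi|\\0&\frac23|\xi|&\frac23\kappa|\xi|^2+\frac{2\gamma}{3}&-\frac23 b_0\\0&0&-\mathcal C\gamma&a|\xi|^2+\mathcal Cb_0\end{pmatrix}$$ have strictly positive real part. Equivalently, writing $\varrho=|\xi|$ and $\det(A-\lambda I)=\lambda^4-a_1\lambda^3+a_2\lambda^2-a_3\lambda+a_4$, one has $a_1>0$, $A_2:=a_1a_2-a_3>0$ and $A_3:=a_3(a_1a_2-a_3)-a_1^2a_4>0$ for all $\varrho>0$, where $$a_1=(a+\tfrac23\kappa+\nu)\varrho^2+\tfrac{2\gamma}{3}+\mathcal Cb_0,$$ $$a_2=\Big[(\nu a+\tfrac23\nu\kappa+\tfrac23a\kappa)\varrho^2+\tfrac{2\gamma\nu}{3}+\mathcal Cb_0\nu+\tfrac{2\gamma a}{3}+\tfrac{2\kappa\mathcal Cb_0}{3}+\tfrac53\Big]\varrho^2,$$ $$a_3=\Big[\tfrac23a\kappa\nu\varrho^4+\big(\tfrac{2(\gamma a+\kappa\mathcal Cb_0)\nu}{3}+\tfrac{5a}{3}+\tfrac{2\kappa}{3}\big)\varrho^2+\tfrac53\mathcal Cb_0+\tfrac{8\gamma}{9}\Big]\varrho^2,$$ $$a_4=\tfrac23\big(a\kappa\varrho^2+a\gamma+\kappa\mathcal Cb_0\big)\varrho^4.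$$
   Context: Constants: $\mathcal C,\mathcal L,\sigma_a,\sigma_s>0$, $\mu>0$, $\lambda=\zeta-\frac23\mu$ with $\zeta\ge0$, $\kappa>0$, $b'(1)>0$ (derivative at $1$ of a given smooth function $b$). Set $\nu=\lambda+2\mu$, $\gamma=\mathcal L\sigma_a b'(1)$, $a=\frac{\mathcal C}{3\mathcal L(\sigma_a+\sigma_s)}$, $b_0=\mathcal L\sigma_a$. The matrix $A(\xi)$ is the Fourier symbol of the linearized (compressible part of the) diffusion approximation radiation hydrodynamics system in the variables $(\hat\rho,\hat d,\hat\theta,\hat j_0)$ with $d=\Lambda^{-1}\mathrm{div}\,u$, $\Lambda=(-\Delta)^{1/2}$. *)

theory Defs
  imports "HOL-Analysis.Analysis"
begin

definition cplx_mat :: "real^'n^'m \<Rightarrow> complex^'n^'m" where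
  "cplx_mat M = (\<chi> i j. complex_of_real (M $ i $ j))"

definition is_eigenvalue :: "complex^'n^'n \<Rightarrow> complex \<Rightarrow> bool" where
  "is_eigenvalue M c \<longleftrightarrow> (\<exists>v. v \<noteq> 0 \<and> M *v v = c *s v)"

definition A_sym :: "real \<Rightarrow> real \<Rightarrow> real \<Rightarrow> real \<Rightarrow> real \<Rightarrow> real
     \<Rightarrow> real^3 \<Rightarrow> real^4^4" where
  "A_sym nu kappa gamma a b0 CC xi =
     (let r = norm xi in
      vector [ vector [0, r, 0, 0],
               vector [- r, nu * r^2, - r, - (1 / (3 * CC)) * r],
               vector [0, 2/3 * r, 2/3 * kappa * r^2 + 2 * gamma / 3, - 2/3 * b0],
               vector [0, 0, - CC * gamma, a * r^2 + CC * b0] ])"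

end

theory Submission
  imports Defs
begin

definition cA1 :: "'a::field \<Rightarrow> 'a \<Rightarrow> 'a \<Rightarrow> 'a \<Rightarrow> 'a \<Rightarrow> 'a \<Rightarrow> 'a \<Rightarrow> 'a" where
  "cA1 r n k g a b C = (a + 2/3*k + n)*r^2 + 2*g/3 + C*b"
definition cA2 :: "'a::field \<Rightarrow> 'a \<Rightarrow> 'a \<Rightarrow> 'a \<Rightarrow> 'a \<Rightarrow> 'a \<Rightarrow> 'a \<Rightarrow> 'a" where
  "cA2 r n k g a b C = ((n*a + 2/3*n*k + 2/3*a*k)*r^2 + 2*g*n/3 + C*b*n + 2*g*a/3 + 2*k*C*b/3 + 5/3)*r^2"
definition cA3 :: "'a::field \<Rightarrow> 'a \<Rightarrow> 'a \<Rightarrow> 'a \<Rightarrow> 'a \<Rightarrow> 'a \<Rightarrow> 'a \<Rightarrow> 'a" where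
  "cA3 r n k g a b C = (2/3*a*k*n*r^4 + (2*(g*a + k*C*b)*n/3 + 5*a/3 + 2*k/3)*r^2 + 5/3*C*b + 8*g/9)*r^2"
definition cA4 :: "'a::field \<Rightarrow> 'a \<Rightarrow> 'a \<Rightarrow> 'a \<Rightarrow> 'a \<Rightarrow> 'a \<Rightarrow> 'a \<Rightarrow> 'a" where
  "cA4 r n k g a b C = 2/3*(a*k*r^2 + a*g + k*C*b)*r^4"

lemma cA_of_real:
  "of_real (cA1 r n k g a b C) = cA1 (of_real r) (of_real n) (of_real k) (of_real g) (of_real a) (of_real b) (of_real C :: complex)"
  "of_real (cA2 r n k g a b C) = cA2 (of_real r) (of_real n) (of_real k) (of_real g) (of_real a) (of_real b) (of_real C :: complex)"
  "of_real (cA3 r n k g a b C) = cA3 (of_real r) (of_real n) (of_real k) (of_real g) (of_real a) (of_real b) (of_real C :: complex)"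
  "of_real (cA4 r n k g a b C) = cA4 (of_real r) (of_real n) (of_real k) (of_real g) (of_real a) (of_real b) (of_real C :: complex)"
  unfolding cA1_def cA2_def cA3_def cA4_def by simp_all

lemma hurwitz_conds:
  fixes r n k g a b C :: real
  assumes "r > 0" "n > 0" "k > 0" "g > 0" "a > 0" "b > 0" "C > 0"
  shows "cA1 r n k g a b C > 0" "cA4 r n k g a b C > 0"
    "cA1 r n k g a b C * cA2 r n k g a b C - cA3 r n k g a b C > 0"
    "cA3 r n k g a b C * (cA1 r n k g a b C * cA2 r n k g a b C - cA3 r n k g a b C)
       - (cA1 r n k g a b C)^2 * cA4 r n k g a b C > 0"
proof -
  show "cA1 r n k g a b C > 0" unfolding cA1_def by (intro add_pos_pos mult_pos_pos zero_less_power; simp add: assms)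
  show "cA4 r n k g a b C > 0" unfolding cA4_def by (intro add_pos_pos mult_pos_pos zero_less_power; simp add: assms)
  have e2: "cA1 r n k g a b C * cA2 r n k g a b C - cA3 r n k g a b C = ((2/9)*r^2*g + (2/3)*r^2*g*a*b*C + (4/9)*r^2*g^2*a + (2/3)*r^2*k*b^2*C^2 + (4/9)*r^2*k*g*b*C + 1*r^2*n*b^2*C^2 + (4/3)*r^2*n*g*b*C + (4/9)*r^2*n*g^2 + (2/3)*r^4*g*a^2 + (4/9)*r^4*k + (4/3)*r^4*k*a*b*C + (8/9)*r^4*k*g*a + (4/9)*r^4*k^2*b*C + (5/3)*r^4*n + 2*r^4*n*a*b*C + (4/3)*r^4*n*g*a + (4/3)*r^4*n*k*b*C + (8/9)*r^4*n*k*g + 1*r^4*n^2*b*C + (2/3)*r^4*n^2*g + (2/3)*r^6*k*a^2 + (4/9)*r^6*k^2*a + 1*r^6*n*a^2 + (4/3)*r^6*n*k*a + (4/9)*r^6*n*k^2 + 1*r^6*n^2*a + (2/3)*r^6*n^2*k)"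
    unfolding cA1_def cA2_def cA3_def by algebra
  have "((2/9)*r^2*g + (2/3)*r^2*g*a*b*C + (4/9)*r^2*g^2*a + (2/3)*r^2*k*b^2*C^2 + (4/9)*r^2*k*g*b*C + 1*r^2*n*b^2*C^2 + (4/3)*r^2*n*g*b*C + (4/9)*r^2*n*g^2 + (2/3)*r^4*g*a^2 + (4/9)*r^4*k + (4/3)*r^4*k*a*b*C + (8/9)*r^4*k*g*a + (4/9)*r^4*k^2*b*C + (5/3)*r^4*n + 2*r^4*n*a*b*C + (4/3)*r^4*n*g*a + (4/3)*r^4*n*k*b*C + (8/9)*r^4*n*k*g + 1*r^4*n^2*b*C + (2/3)*r^4*n^2*g + (2/3)*r^6*k*a^2 + (4/9)*r^6*k^2*a + 1*r^6*n*a^2 + (4/3)*r^6*n*k*a + (4/9)*r^6*n*k^2 + 1*r^6*n^2*a + (2/3)*r^6*n^2*k) > 0" by (intro add_pos_pos mult_pos_pos zero_less_power; simp add: assms)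
  with e2 show "cA1 r n k g a b C * cA2 r n k g a b C - cA3 r n k g a b C > 0" by simp
  have e3: "cA3 r n k g a b C * (cA1 r n k g a b C * cA2 r n k g a b C - cA3 r n k g a b C)
       - (cA1 r n k g a b C)^2 * cA4 r n k g a b C = ((10/27)*r^4*g*b*C + (4/9)*r^4*g*a*b^2*C^2 + (16/81)*r^4*g^2 + (4/9)*r^4*g^2*a*b*C + (8/81)*r^4*g^3*a + (4/9)*r^4*k*b^3*C^3 + (4/9)*r^4*k*g*b^2*C^2 + (8/81)*r^4*k*g^2*b*C + (5/3)*r^4*n*b^3*C^3 + (28/9)*r^4*n*g*b^2*C^2 + (52/27)*r^4*n*g^2*b*C + (32/81)*r^4*n*g^3 + (10/27)*r^6*g*a + (8/9)*r^6*g*a^2*b*C + (4/9)*r^6*g^2*a^2 + (20/27)*r^6*k*b*C + (4/3)*r^6*k*a*b^2*C^2 + (44/81)*r^6*k*g + (32/27)*r^6*k*g*a*b*C + (16/81)*r^6*k*g^2*a + (8/27)*r^6*k^2*b^2*C^2 + (8/81)*r^6*k^2*g*b*C + (25/9)*r^6*n*b*C + 5*r^6*n*a*b^2*C^2 + (40/27)*r^6*n*g + (44/9)*r^6*n*g*a*b*C + (32/27)*r^6*n*g^2*a + (4/9)*r^6*n*g^2*a^2*b*C + (8/27)*r^6*n*g^3*a^2 + (14/9)*r^6*n*k*b^2*C^2 + (76/27)*r^6*n*k*g*b*C + (8/9)*r^6*n*k*g*a*b^2*C^2 + (88/81)*r^6*n*k*g^2 + (16/27)*r^6*n*k*g^2*a*b*C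 + (4/9)*r^6*n*k^2*b^3*C^3 + (8/27)*r^6*n*k^2*g*b^2*C^2 + (5/3)*r^6*n^2*b^2*C^2 + 2*r^6*n^2*g*b*C + (2/3)*r^6*n^2*g*a*b^2*C^2 + (16/27)*r^6*n^2*g^2 + (8/9)*r^6*n^2*g^2*a*b*C + (8/27)*r^6*n^2*g^3*a + (2/3)*r^6*n^2*k*b^3*C^3 + (8/9)*r^6*n^2*k*g*b^2*C^2 + (8/27)*r^6*n^2*k*g^2*b*C + (4/9)*r^8*g*a^3 + (20/27)*r^8*k*a + (4/3)*r^8*k*a^2*b*C + (20/27)*r^8*k*g*a^2 + (8/27)*r^8*k^2 + (16/27)*r^8*k^2*a*b*C + (8/81)*r^8*k^2*g*a + (25/9)*r^8*n*a + 5*r^8*n*a^2*b*C + (16/9)*r^8*n*g*a^2 + (4/9)*r^8*n*g^2*a^3 + (10/9)*r^8*n*k + (28/9)*r^8*n*k*a*b*C + (20/9)*r^8*n*k*g*a + (16/9)*r^8*n*k*g*a^2*b*C + (8/9)*r^8*n*k*g^2*a^2 + (28/27)*r^8*n*k^2*b*C + (4/3)*r^8*n*k^2*a*b^2*C^2 + (80/81)*r^8*n*k^2*g + (32/27)*r^8*n*k^2*g*a*b*C + (8/27)*r^8*n*k^3*b^2*C^2 + (10/3)*r^8*n^2*a*b*C + (22/9)*r^8*n^2*g*a + (4/3)*r^8*n^2*g*a^2*b*C + (8/9)*r^8*n^2*g^2*a^2 + (20/9)*r^8*n^2*k*b*C + 2*r^8*n^2*k*a*b^2*C^2 + (28/27)*r^8*n^2*k*g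 + (8/3)*r^8*n^2*k*g*a*b*C + (8/9)*r^8*n^2*k*g^2*a + (8/9)*r^8*n^2*k^2*b^2*C^2 + (16/27)*r^8*n^2*k^2*g*b*C + (2/3)*r^8*n^3*g*a*b*C + (4/9)*r^8*n^3*g^2*a + (2/3)*r^8*n^3*k*b^2*C^2 + (4/9)*r^8*n^3*k*g*b*C + (4/9)*r^10*k*a^3 + (8/27)*r^10*k^2*a^2 + (5/3)*r^10*n*a^3 + (14/9)*r^10*n*k*a^2 + (8/9)*r^10*n*k*g*a^3 + (28/27)*r^10*n*k^2*a + (4/3)*r^10*n*k^2*a^2*b*C + (8/9)*r^10*n*k^2*g*a^2 + (8/27)*r^10*n*k^3 + (16/27)*r^10*n*k^3*a*b*C + (5/3)*r^10*n^2*a^2 + (2/3)*r^10*n^2*g*a^3 + (20/9)*r^10*n^2*k*a + 2*r^10*n^2*k*a^2*b*C + (16/9)*r^10*n^2*k*g*a^2 + (4/9)*r^10*n^2*k^2 + (16/9)*r^10*n^2*k^2*a*b*C + (8/9)*r^10*n^2*k^2*g*a + (8/27)*r^10*n^2*k^3*b*C + (2/3)*r^10*n^3*g*a^2 + (4/3)*r^10*n^3*k*a*b*C + (8/9)*r^10*n^3*k*g*a + (4/9)*r^10*n^3*k^2*b*C + (4/9)*r^12*n*k^2*a^3 + (8/27)*r^12*n*k^3*a^2 + (2/3)*r^12*n^2*k*a^3 + (8/9)*r^12*n^2*k^2*a^2 + (8/27)*r^12*n^2*k^3*a + (2/3)*r^12*n^3*k*a^2 + (4/9)*r^12*n^3*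k^2*a)"
    unfolding cA1_def cA2_def cA3_def cA4_def by algebra
  have "((10/27)*r^4*g*b*C + (4/9)*r^4*g*a*b^2*C^2 + (16/81)*r^4*g^2 + (4/9)*r^4*g^2*a*b*C + (8/81)*r^4*g^3*a + (4/9)*r^4*k*b^3*C^3 + (4/9)*r^4*k*g*b^2*C^2 + (8/81)*r^4*k*g^2*b*C + (5/3)*r^4*n*b^3*C^3 + (28/9)*r^4*n*g*b^2*C^2 + (52/27)*r^4*n*g^2*b*C + (32/81)*r^4*n*g^3 + (10/27)*r^6*g*a + (8/9)*r^6*g*a^2*b*C + (4/9)*r^6*g^2*a^2 + (20/27)*r^6*k*b*C + (4/3)*r^6*k*a*b^2*C^2 + (44/81)*r^6*k*g + (32/27)*r^6*k*g*a*b*C + (16/81)*r^6*k*g^2*a + (8/27)*r^6*k^2*b^2*C^2 + (8/81)*r^6*k^2*g*b*C + (25/9)*r^6*n*b*C + 5*r^6*n*a*b^2*C^2 + (40/27)*r^6*n*g + (44/9)*r^6*n*g*a*b*C + (32/27)*r^6*n*g^2*a + (4/9)*r^6*n*g^2*a^2*b*C + (8/27)*r^6*n*g^3*a^2 + (14/9)*r^6*n*k*b^2*C^2 + (76/27)*r^6*n*k*g*b*C + (8/9)*r^6*n*k*g*a*b^2*C^2 + (88/81)*r^6*n*k*g^2 + (16/27)*r^6*n*k*g^2*a*b*C + (4/9)*r^6*n*k^2*b^3*C^3 + (8/27)*r^6*n*k^2*g*b^2*C^2 + (5/3)*r^6*n^2*b^2*C^2 + 2*r^6*n^2*g*b*C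 + (2/3)*r^6*n^2*g*a*b^2*C^2 + (16/27)*r^6*n^2*g^2 + (8/9)*r^6*n^2*g^2*a*b*C + (8/27)*r^6*n^2*g^3*a + (2/3)*r^6*n^2*k*b^3*C^3 + (8/9)*r^6*n^2*k*g*b^2*C^2 + (8/27)*r^6*n^2*k*g^2*b*C + (4/9)*r^8*g*a^3 + (20/27)*r^8*k*a + (4/3)*r^8*k*a^2*b*C + (20/27)*r^8*k*g*a^2 + (8/27)*r^8*k^2 + (16/27)*r^8*k^2*a*b*C + (8/81)*r^8*k^2*g*a + (25/9)*r^8*n*a + 5*r^8*n*a^2*b*C + (16/9)*r^8*n*g*a^2 + (4/9)*r^8*n*g^2*a^3 + (10/9)*r^8*n*k + (28/9)*r^8*n*k*a*b*C + (20/9)*r^8*n*k*g*a + (16/9)*r^8*n*k*g*a^2*b*C + (8/9)*r^8*n*k*g^2*a^2 + (28/27)*r^8*n*k^2*b*C + (4/3)*r^8*n*k^2*a*b^2*C^2 + (80/81)*r^8*n*k^2*g + (32/27)*r^8*n*k^2*g*a*b*C + (8/27)*r^8*n*k^3*b^2*C^2 + (10/3)*r^8*n^2*a*b*C + (22/9)*r^8*n^2*g*a + (4/3)*r^8*n^2*g*a^2*b*C + (8/9)*r^8*n^2*g^2*a^2 + (20/9)*r^8*n^2*k*b*C + 2*r^8*n^2*k*a*b^2*C^2 + (28/27)*r^8*n^2*k*g + (8/3)*r^8*n^2*k*g*a*b*C + (8/9)*r^8*n^2*k*g^2*a + (8/9)*r^8*n^2*k^2*b^2*C^2 + (16/27)*r^8*n^2*k^2*g*b*C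 + (2/3)*r^8*n^3*g*a*b*C + (4/9)*r^8*n^3*g^2*a + (2/3)*r^8*n^3*k*b^2*C^2 + (4/9)*r^8*n^3*k*g*b*C + (4/9)*r^10*k*a^3 + (8/27)*r^10*k^2*a^2 + (5/3)*r^10*n*a^3 + (14/9)*r^10*n*k*a^2 + (8/9)*r^10*n*k*g*a^3 + (28/27)*r^10*n*k^2*a + (4/3)*r^10*n*k^2*a^2*b*C + (8/9)*r^10*n*k^2*g*a^2 + (8/27)*r^10*n*k^3 + (16/27)*r^10*n*k^3*a*b*C + (5/3)*r^10*n^2*a^2 + (2/3)*r^10*n^2*g*a^3 + (20/9)*r^10*n^2*k*a + 2*r^10*n^2*k*a^2*b*C + (16/9)*r^10*n^2*k*g*a^2 + (4/9)*r^10*n^2*k^2 + (16/9)*r^10*n^2*k^2*a*b*C + (8/9)*r^10*n^2*k^2*g*a + (8/27)*r^10*n^2*k^3*b*C + (2/3)*r^10*n^3*g*a^2 + (4/3)*r^10*n^3*k*a*b*C + (8/9)*r^10*n^3*k*g*a + (4/9)*r^10*n^3*k^2*b*C + (4/9)*r^12*n*k^2*a^3 + (8/27)*r^12*n*k^3*a^2 + (2/3)*r^12*n^2*k*a^3 + (8/9)*r^12*n^2*k^2*a^2 + (8/27)*r^12*n^2*k^3*a + (2/3)*r^12*n^3*k*a^2 + (4/9)*r^12*n^3*k^2*a) > 0" by (intro add_pos_pos mult_pos_pos zero_less_power; simp add: assms)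
  with e3 show "cA3 r n k g a b C * (cA1 r n k g a b C * cA2 r n k g a b C - cA3 r n k g a b C)
       - (cA1 r n k g a b C)^2 * cA4 r n k g a b C > 0" by simp
qed

lemma charp:
  fixes z r n k g a b C e v1 v2 v3 v4 :: complex
  assumes eC: "e * C = 1/3"
   and E1: "z* v1 = r* v2"
   and E2: "z* v2 = -r* v1 + n*r^2* v2 - r* v3 - e*r* v4"
   and E3: "z* v3 = (2/3)*r* v2 + ((2/3)*k*r^2 + (2/3)*g)* v3 - (2/3)*b* v4"
   and E4: "z* v4 = -C*g* v3 + (a*r^2 + C*b)* v4"
  defines "P \<equiv> (-z)^4 + cA1 r n k g a b C * (-z)^3 + cA2 r n k g a b C * (-z)^2 + cA3 r n k g a b C * (-z) + cA4 r n k g a b C"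
  shows "P * v1 = 0" "P * v2 = 0" "P * v3 = 0" "P * v4 = 0"
  using assms unfolding cA1_def cA2_def cA3_def cA4_def by algebra+
lemma energy_step:
  fixes x y g w :: complex and \<beta> :: real
  assumes "x - y = of_real \<beta> * w * g"
  shows "Re (x * cnj g) - Re (y * cnj g) = \<beta> * Re w * (cmod g)^2"
proof -
  have "x * cnj g = y * cnj g + of_real \<beta> * w * (g * cnj g)"
    using assms by (simp add: algebra_simps eq_diff_eq)
  also have "g * cnj g = of_real ((cmod g)^2)" by (simp add: complex_mult_cnj cmod_power2)
  finally have "x * cnj g = y * cnj g + of_real (\<beta> * (cmod g)^2) * w" by simp
  then show ?thesis by simp
qed

lemma hurwitz4:
  fixes w :: complex and a1 a2 a3 a4 :: real
  assumes h1: "a1 > 0" and h2: "a1*a2 - a3 > 0" and h3: "a3*(a1*a2-a3) - a1^2*a4 > 0"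
    and h4: "a4 > 0"
    and root: "w^4 + of_real a1 * w^3 + of_real a2 * w^2 + of_real a3 * w + of_real a4 = 0"
  shows "Re w < 0"
proof -
  define c where "c = (a1*a2 - a3)/a1"
  define d where "d = (a3*(a1*a2-a3) - a1^2*a4)/(a1*a2-a3)"
  have c: "c > 0" unfolding c_def using h1 h2 by simp
  have d: "d > 0" unfolding d_def using h2 h3 by simp
  define g0 where "g0 = w^4 + of_real a2 * w^2 + of_real a4"
  define g1 where "g1 = of_real a1 * w^3 + of_real a3 * w"
  define g2 where "g2 = of_real c * w^2 + of_real a4"
  define g3 where "g3 = of_real d * w"
  define g4 where "g4 = (of_real a4 :: complex)"
  have ca: "a2 - c = a3/a1" unfolding c_def using h1 by (simp add: field_simps)
  have da: "a3 - d = a1 * a4 / c" unfolding d_def c_def using h1 h2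
    by (simp add: field_simps power2_eq_square)
  have R1: "g0 - g2 = of_real (1/a1) * w * g1"
  proof -
    have "g0 - g2 = w^4 + of_real (a2 - c) * w^2" unfolding g0_def g2_def by (simp add: algebra_simps)
    also have "\<dots> = of_real (1/a1) * w * g1" unfolding ca g1_def using h1
      by (simp add: field_simps power2_eq_square power3_eq_cube power4_eq_xxxx)
    finally show ?thesis .
  qed
  have R2: "g1 - g3 = of_real (a1/c) * w * g2"
  proof -
    have "g1 - g3 = of_real a1 * w^3 + of_real (a3 - d) * w" unfolding g1_def g3_def by (simp add: algebra_simps)
    also have "\<dots> = of_real (a1/c) * w * g2" unfolding da g2_def using c
      by (simp add: field_simps power2_eq_square power3_eq_cube)
    finally show ?thesis .
  qed
  have R3: "g2 - g4 = of_real (c/d) * w * g3"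
    unfolding g2_def g4_def g3_def using d by (simp add: field_simps power2_eq_square)
  have R4: "g3 - 0 = of_real (d/a4) * w * g4"
    unfolding g3_def g4_def using h4 by (simp add: field_simps)
  have g01: "g0 = - g1" using root unfolding g0_def g1_def by (simp add: algebra_simps eq_neg_iff_add_eq_0)
  note E1 = energy_step[OF R1] and E2 = energy_step[OF R2] and E3 = energy_step[OF R3]
    and E4 = energy_step[OF R4]
  have sym: "Re (x * cnj y) = Re (y * cnj x)" for x y :: complex by simp
  define S where "S = (1/a1) * (cmod g1)^2 + (a1/c) * (cmod g2)^2 + (c/d) * (cmod g3)^2 + (d/a4) * (cmod g4)^2"
  have "Re (g0 * cnj g1) = Re w * S"
    using E1 E2 E3 E4 sym[of g2 g1] sym[of g3 g2] sym[of g4 g3] unfolding S_def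
    by (simp add: algebra_simps)
  moreover have "Re (g0 * cnj g1) = - ((cmod g1)^2)"
    using g01 by (simp add: complex_mult_cnj cmod_power2)
  ultimately have key: "Re w * S = - ((cmod g1)^2)" by simp
  have g4nz: "cmod g4 > 0" unfolding g4_def using h4 by simp
  have S: "S > 0" unfolding S_def using h1 c d h4 g4nz
    by (intro add_nonneg_pos) (auto intro!: add_nonneg_nonneg mult_nonneg_nonneg)
  show ?thesis
  proof (rule ccontr)
    assume "\<not> Re w < 0"
    hence s: "Re w \<ge> 0" by simp
    hence "Re w * S \<ge> 0" using S by simp
    hence "(cmod g1)^2 \<le> 0" using key by linarith
    hence "cmod g1 = 0" by (simp add: power2_eq_square mult_le_0_iff)
    hence g1z: "g1 = 0" by simp
    hence "Re w * S = 0" using key by simp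
    hence w0: "Re w = 0" using S by simp
    have "g0 = 0" using g01 g1z by simp
    hence "g2 = 0" using R1 g1z by simp
    hence "g3 = 0" using R2 g1z by simp
    hence "g4 = 0" using R3 \<open>g2 = 0\<close> by simp
    thus False using g4nz by simp
  qed
qed


lemma vector_4 [simp]:
  "(vector [x1,x2,x3,x4] ::('a::zero)^4)$1 = x1"
  "(vector [x1,x2,x3,x4] ::('a::zero)^4)$2 = x2"
  "(vector [x1,x2,x3,x4] ::('a::zero)^4)$3 = x3"
  "(vector [x1,x2,x3,x4] ::('a::zero)^4)$4 = x4"
  unfolding vector_def by simp_all

lemma general:
  fixes nu kappa gamma a b0 CC :: real and xi :: "real^3" and z :: complex
  assumes pos: "nu > 0" "kappa > 0" "gamma > 0" "a > 0" "b0 > 0" "CC > 0"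
    and xi: "xi \<noteq> 0"
    and ev: "is_eigenvalue (cplx_mat (A_sym nu kappa gamma a b0 CC xi)) z"
  shows "Re z > 0"
proof -
  define r where "r = norm xi"
  have r: "r > 0" using xi unfolding r_def by simp
  obtain v where v0: "v \<noteq> 0" and eq: "cplx_mat (A_sym nu kappa gamma a b0 CC xi) *v v = z *s v"
    using ev unfolding is_eigenvalue_def by blast
  have comp: "(cplx_mat (A_sym nu kappa gamma a b0 CC xi) *v v) $ i = z * v $ i" for i
    using eq by (metis vector_smult_component)
  note unf = matrix_vector_mult_def sum_4 cplx_mat_def A_sym_def Let_def r_def[symmetric]
  have c1: "z * v$1 = of_real r * v$2" using comp[of 1] by (simp add: unf)
  have c2: "z * v$2 = - of_real r * v$1 + of_real nu * of_real r ^ 2 * v$2 - of_real r * v$3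
              - of_real (1 / (3 * CC)) * of_real r * v$4"
    using comp[of 2] by (simp add: unf algebra_simps)
  have c3: "z * v$3 = (2/3) * of_real r * v$2 + ((2/3) * of_real kappa * of_real r^2 + (2/3) * of_real gamma) * v$3
              - (2/3) * of_real b0 * v$4"
    using comp[of 3] by (simp add: unf algebra_simps)
  have c4: "z * v$4 = - of_real CC * of_real gamma * v$3 + (of_real a * of_real r^2 + of_real CC * of_real b0) * v$4"
    using comp[of 4] by (simp add: unf algebra_simps)
  have eC: "complex_of_real (1 / (3 * CC)) * of_real CC = 1/3" using pos(6)
    by (simp add: field_simps)
  define P where "P = (-z)^4 + cA1 (of_real r) (of_real nu) (of_real kappa) (of_real gamma) (of_real a) (of_real b0) (of_real CC) * (-z)^3
     + cA2 (of_real r) (of_real nu) (of_real kappa) (of_real gamma) (of_real a) (of_real b0) (of_real CC) * (-z)^2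
     + cA3 (of_real r) (of_real nu) (of_real kappa) (of_real gamma) (of_real a) (of_real b0) (of_real CC) * (-z)
     + cA4 (of_real r) (of_real nu) (of_real kappa) (of_real gamma) (of_real a) (of_real b0) (of_real (CC::real)::complex)"
  note cp = charp[OF eC c1 c2 c3 c4, folded P_def]
  have "P = 0"
  proof (rule ccontr)
    assume "P \<noteq> 0"
    hence "v$1 = 0" "v$2 = 0" "v$3 = 0" "v$4 = 0" using cp by auto
    hence "v = 0" by (metis (full_types) exhaust_4 vec_eq_iff zero_index)
    thus False using v0 by simp
  qed
  hence root: "(-z)^4 + of_real (cA1 r nu kappa gamma a b0 CC) * (-z)^3 + of_real (cA2 r nu kappa gamma a b0 CC) * (-z)^2
     + of_real (cA3 r nu kappa gamma a b0 CC) * (-z) + of_real (cA4 r nu kappa gamma a b0 CC) = 0"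
    unfolding P_def cA_of_real .
  note hc = hurwitz_conds[OF r pos]
  have "Re (-z) < 0" by (rule hurwitz4[OF hc(1) hc(3) hc(4) hc(2) root])
  thus ?thesis by simp
qed

theorem mainTheorem5:
  fixes CC LL sigma_a sigma_s mu zeta kappa :: real
    and b :: "real \<Rightarrow> real"
    and xi :: "real^3" and z :: complex
  assumes "CC > 0" "LL > 0" "sigma_a > 0" "sigma_s > 0" "mu > 0" "zeta \<ge> 0" "kappa > 0"
    and "b differentiable (at 1)" "deriv b 1 > 0"
    and "xi \<noteq> 0"
    and "is_eigenvalue
           (cplx_mat (A_sym ((zeta - 2/3 * mu) + 2 * mu) kappa (LL * sigma_a * deriv b 1)
                        (CC / (3 * LL * (sigma_a + sigma_s))) (LL * sigma_a) CC xi)) z"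
  shows "Re z > 0"
proof (rule general[OF _ _ _ _ _ _ assms(10) assms(11)])
  show "(zeta - 2/3 * mu) + 2 * mu > 0" using assms by simp
  show "LL * sigma_a * deriv b 1 > 0" using assms by simp
  show "CC / (3 * LL * (sigma_a + sigma_s)) > 0" using assms by simp
  show "LL * sigma_a > 0" using assms by simp
qed (use assms in auto)

end
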